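(* Let $p,q\geq 2$ be relatively prime integers, let $t>0$ and $k\geq 2t+1$ be integers, and let $w_1,w_2\in A_{pq}^k$. Then (1) if $\mathrm{int}(w_1)<q^{2t}$ then $\mathrm{int}(F_{p,q}^t(w_1))=0$; and (2) if $\mathrm{int}(w_2)\equiv\mathrm{int}(w_1)+q^{2t}\pmod{(pq)^k}$ then $\mathrm{int}(F_{p,q}^t(w_2))\equiv\mathrm{int}(F_{p,q}^t(w_1))+1\pmod{(pq)^{k-2t}}$.
   Context: For an integer $n>1$, $A_n=\{0,\dots,n-1\}$, and $A_n^k$ is the set of words of length $k$. Define $g_{p,q}:A_{pq}\times A_{pq}\to A_{pq}$ by writing $x=x_1q+x_0$, $y=y_1q+y_0$ with $x_0,y_0\in A_q$, $x_1,y_1\in A_p$ (uniquely), and $g_{p,q}(x,y)=x_0p+y_1$, and $f_{p,q}(x,a,y)=g_{p,q}(g_{p,q}(x,a),g_{p,q}(a,y))$. For a word $w=w(1)\cdots w(m)$ with $m\geq3$, $F_{p,q}(w)=u(1)\cdots u(m-2)$ with $u(i)=f_{p,q}(w(i),w(i+1),w(i+2))$, and for $m\geq 2t+1$, $F_{p,q}^t(w)=F_{p,q}(F_{p,q}^{t-1}(w))$, a word of length $m-2t$. For a nonempty word $w=w(1)\cdots w(m)$ over $A_{pq}$, $\mathrm{int}(w)=\sum_{i=0}^{m-1}w(m-i)(pq)^i$. *)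

theory Defs
  imports Main
begin

text \<open>Letters of A_n are naturals below n; words are lists of naturals.\<close>

definition g :: "nat \<Rightarrow> nat \<Rightarrow> nat \<Rightarrow> nat \<Rightarrow> nat" where
  "g p q x y = (x mod q) * p + y div q"

definition f :: "nat \<Rightarrow> nat \<Rightarrow> nat \<Rightarrow> nat \<Rightarrow> nat \<Rightarrow> nat" where
  "f p q x a y = g p q (g p q x a) (g p q a y)"

definition F :: "nat \<Rightarrow> nat \<Rightarrow> nat list \<Rightarrow> nat list" where
  "F p q w = map (\<lambda>i. f p q (w ! i) (w ! (i + 1)) (w ! (i + 2))) [0..<length w - 2]"

definition Fpow :: "nat \<Rightarrow> nat \<Rightarrow> nat \<Rightarrow> nat list \<Rightarrow> nat list" where
  "Fpow p q t = (F p q ^^ t)"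

text \<open>int(w) = sum_{i=0}^{m-1} w(m-i) (pq)^i, i.e. base-pq value, most significant first.\<close>
definition wint :: "nat \<Rightarrow> nat \<Rightarrow> nat list \<Rightarrow> nat" where
  "wint p q w = (\<Sum>i<length w. w ! (length w - 1 - i) * (p * q) ^ i)"

end

theory Submission
  imports Defs
begin

lemma digits_sum:
  fixes b :: nat
  assumes "b > 0"
  shows "\<forall>j<n. d j < b \<Longrightarrow> i < n \<Longrightarrow> (\<Sum>j<n. d j * b ^ j) div b ^ i mod b = d i"
proof (induction n arbitrary: d i)
  case 0 then show ?case by simp
next
  case (Suc n)
  have e: "(\<Sum>j<Suc n. d j * b ^ j) = d 0 + b * (\<Sum>j<n. d (Suc j) * b ^ j)"
    by (subst sum.lessThan_Suc_shift) (simp add: sum_distrib_left mult.assoc mult.left_commute del: sum.lessThan_Suc)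
  have d0: "d 0 < b" using Suc.prems by auto
  show ?case
  proof (cases i)
    case 0 then show ?thesis using e d0 by simp
  next
    case (Suc i')
    have "(d 0 + b * (\<Sum>j<n. d (Suc j) * b ^ j)) div b ^ i
        = (d 0 + b * (\<Sum>j<n. d (Suc j) * b ^ j)) div b div b ^ i'"
      using Suc by (simp add: div_mult2_eq)
    also have "\<dots> = (\<Sum>j<n. d (Suc j) * b ^ j) div b ^ i'"
      using d0 assms by simp
    finally show ?thesis using e Suc.IH[of "\<lambda>j. d (Suc j)" i'] Suc.prems Suc by auto
  qed
qed

lemma sum_lt:
  fixes b :: nat
  shows "\<forall>j<n. d j < b \<Longrightarrow> (\<Sum>j<n. d j * b ^ j) < b ^ n"
proof (induction n)
  case 0 then show ?case by simp
next
  case (Suc n)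
  have "d n * b ^ n \<le> (b - 1) * b ^ n" using Suc.prems by auto
  moreover have "(\<Sum>j<n. d j * b ^ j) < b ^ n" using Suc by auto
  ultimately have "(\<Sum>j<n. d j * b ^ j) + d n * b ^ n < b ^ n + (b - 1) * b ^ n" by linarith
  also have "\<dots> = b ^ Suc n" using Suc.prems
    by (cases b) (auto simp: algebra_simps)
  finally show ?case by simp
qed

lemma mod_digits:
  fixes b X :: nat
  shows "X mod b ^ n = (\<Sum>i<n. X div b ^ i mod b * b ^ i)"
proof (induction n)
  case 0 then show ?case by simp
next
  case (Suc n)
  have "X mod b ^ Suc n = X mod (b ^ n * b)" by (simp add: mult.commute)
  also have "\<dots> = b ^ n * (X div b ^ n mod b) + X mod b ^ n" by (rule mod_mult2_eq)
  finally show ?case using Suc by (simp add: mult.commute)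
qed

lemma wint_digit:
  assumes "p * q > 0" "set w \<subseteq> {..<p * q}" "i < length w"
  shows "wint p q w div (p * q) ^ i mod (p * q) = w ! (length w - 1 - i)"
  unfolding wint_def
  by (rule digits_sum[OF assms(1)]) (use assms in \<open>auto simp: subset_iff\<close>)

lemma wint_lt:
  assumes "set w \<subseteq> {..<p * q}"
  shows "wint p q w < (p * q) ^ length w"
  unfolding wint_def
  by (rule sum_lt) (use assms in \<open>auto simp: subset_iff\<close>)

lemma g_lemma:
  assumes "p > 0" "q > 0"
  shows "g p q (M div (p*q) mod (p*q)) (M mod (p*q)) = M div q mod (p*q)"
proof -
  define a where "a = M div (p*q)"
  define r where "r = M mod (p*q)"
  have M: "M = a * p * q + r" unfolding a_def r_def
    using div_mult_mod_eq[of M "p*q"] by (simp add: mult.assoc)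
  have rlt: "r < p * q" unfolding r_def using assms by simp
  have Mq: "M div q = a * p + r div q"
    unfolding M using assms by simp
  have r: "r div q < p" using rlt by (intro less_mult_imp_div_less) simp
  have x: "a mod (p*q) mod q = a mod q"
    by (simp add: mod_mod_cancel)
  have ap: "(a * p) mod (p*q) = (a mod q) * p"
    using mult_mod_left[of a q p] by (simp add: mult.commute)
  have lt: "(a mod q) * p + r div q < p * q"
  proof -
    have "a mod q < q" using assms by simp
    then have "a mod q \<le> q - 1" by linarith
    then have "(a mod q) * p \<le> (q - 1) * p" by simp
    moreover have "(q - 1) * p + p = p * q" using assms by (cases q) (auto simp: algebra_simps)
    ultimately show ?thesis using r by linarith
  qed
  have "M div q mod (p*q) = (a * p + r div q) mod (p*q)" by (simp only: Mq)
  also have "\<dots> = ((a * p) mod (p*q) + r div q) mod (p*q)"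
    by (rule mod_add_left_eq[symmetric])
  also have "\<dots> = (a mod q) * p + r div q"
    unfolding ap using lt by (rule mod_less)
  finally show ?thesis unfolding g_def x a_def[symmetric] r_def[symmetric] by simp
qed

lemma f_lemma:
  assumes "p > 0" "q > 0"
  shows "f p q (M div (p*q)^2 mod (p*q)) (M div (p*q) mod (p*q)) (M mod (p*q)) = M div q^2 mod (p*q)"
proof -
  let ?b = "p*q"
  have 1: "g p q (M div ?b^2 mod ?b) (M div ?b mod ?b) = M div ?b div q mod ?b"
    using g_lemma[OF assms, of "M div ?b"] by (simp add: div_mult2_eq power2_eq_square)
  have 2: "g p q (M div ?b mod ?b) (M mod ?b) = M div q mod ?b" by (rule g_lemma[OF assms])
  have 3: "M div ?b div q = M div q div ?b" by (metis div_mult2_eq mult.commute)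
  show ?thesis unfolding f_def 1 2 3 g_lemma[OF assms]
    by (simp add: div_mult2_eq power2_eq_square)
qed

lemma g_bound:
  assumes "p > 0" "q > 0" "y < p * q"
  shows "g p q x y < p * q"
proof -
  have "x mod q < q" using assms by simp
  then have "x mod q \<le> q - 1" by linarith
  then have "(x mod q) * p \<le> (q - 1) * p" by simp
  moreover have "y div q < p" using assms by (intro less_mult_imp_div_less) simp
  moreover have "(q - 1) * p + p = p * q" using assms by (cases q) (auto simp: algebra_simps)
  ultimately show ?thesis unfolding g_def by linarith
qed

lemma F_lemma:
  assumes "p > 0" "q > 0" "length w = m" "m \<ge> 3" "set w \<subseteq> {..<p * q}"
  shows "wint p q (F p q w) = wint p q w div q^2 mod (p*q)^(m-2)"
    "length (F p q w) = m - 2" "set (F p q w) \<subseteq> {..<p * q}"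
proof -
  let ?b = "p*q" and ?N = "wint p q w"
  have b: "?b > 0" using assms by simp
  show len: "length (F p q w) = m - 2" using assms by (simp add: F_def)
  show "set (F p q w) \<subseteq> {..<p * q}"
  proof
    fix z assume "z \<in> set (F p q w)"
    then obtain i where i: "i < m - 2" "z = f p q (w ! i) (w ! (i + 1)) (w ! (i + 2))"
      using assms by (auto simp: F_def)
    have "i + 2 < length w" using assms i by simp
    then have "w ! (i+2) \<in> set w" by (rule nth_mem)
    then have "w ! (i+2) < p * q" using assms by blast
    then have "g p q (w ! (i + 1)) (w ! (i + 2)) < p * q" using assms by (intro g_bound) auto
    then show "z \<in> {..<p * q}" unfolding i f_def using assms by (auto intro!: g_bound)
  qed
  have "wint p q (F p q w) = (\<Sum>i<m-2. F p q w ! (m - 3 - i) * ?b ^ i)"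
    unfolding wint_def len by (simp add: numeral_3_eq_3)
  also have "\<dots> = (\<Sum>i<m-2. ?N div q^2 div ?b ^ i mod ?b * ?b ^ i)"
  proof (rule sum.cong[OF refl])
    fix i assume i: "i \<in> {..<m-2}"
    let ?M = "?N div ?b ^ i"
    have e: "F p q w ! (m - 3 - i) = f p q (w ! (m-3-i)) (w ! (m-3-i+1)) (w ! (m-3-i+2))"
    proof -
      have "m - 3 - i < m - 2" using i assms by simp
      then show ?thesis using i assms by (simp add: F_def)
    qed
    have i2: "m-3-i+2 = length w - 1 - i" "m-3-i+1 = length w - 1 - Suc i"
      "m-3-i = length w - 1 - Suc (Suc i)" using i assms by auto
    have e0: "w ! (length w - 1 - i) = ?M mod ?b"
      using wint_digit[OF b assms(5), of i] i assms by simp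
    have e1: "w ! (length w - 1 - Suc i) = ?M div ?b mod ?b"
    proof -
      have "?N div ?b ^ Suc i = ?M div ?b" by (simp only: power_Suc2 div_mult2_eq)
      then show ?thesis using wint_digit[OF b assms(5), of "Suc i"] i assms by simp
    qed
    have e2: "w ! (length w - 1 - Suc (Suc i)) = ?M div ?b^2 mod ?b"
    proof -
      have "?N div ?b ^ Suc (Suc i) = ?M div ?b^2"
        by (simp only: power_Suc2 div_mult2_eq power2_eq_square)
      then show ?thesis using wint_digit[OF b assms(5), of "Suc (Suc i)"] i assms by simp
    qed
    have d0: "w ! (m-3-i+2) = ?M mod ?b" by (simp only: i2(1) e0)
    have d1: "w ! (m-3-i+1) = ?M div ?b mod ?b" by (simp only: i2(2) e1)
    have d2: "w ! (m-3-i) = ?M div ?b^2 mod ?b" by (simp only: i2(3) e2)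
    show "F p q w ! (m - 3 - i) * ?b ^ i = ?N div q^2 div ?b ^ i mod ?b * ?b ^ i"
    proof -
      have c: "?M div q^2 = ?N div q^2 div ?b ^ i" by (metis div_mult2_eq mult.commute)
      show ?thesis unfolding e d0 d1 d2 f_lemma[OF assms(1,2)] c ..
    qed
  qed
  also have "\<dots> = ?N div q^2 mod ?b^(m-2)" by (rule mod_digits[symmetric])
  finally show "wint p q (F p q w) = wint p q w div q^2 mod (p*q)^(m-2)" .
qed

lemma mod_div_mod:
  fixes X p q s L :: nat
  assumes "2 * s \<le> L" "q > 0"
  shows "(X mod (p*q)^L) div q^(2*s) mod (p*q)^(L-2*s) = X div q^(2*s) mod (p*q)^(L - 2*s)"
proof -
  have e: "(p*q)^L = q^(2*s) * (p^(2*s) * (p*q)^(L-2*s))"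
  proof -
    obtain r where r: "L = 2*s + r" using assms le_Suc_ex by blast
    have "(p*q)^L = (p*q)^(2*s) * (p*q)^(L-2*s)" unfolding r by (simp only: diff_add_inverse power_add)
    then show ?thesis by (simp add: power_mult_distrib mult_ac)
  qed
  have "(X mod (p*q)^L) div q^(2*s) = X div q^(2*s) mod (p^(2*s) * (p*q)^(L-2*s))"
    unfolding e mod_mult2_eq using assms(2) by simp
  then show ?thesis by (simp add: mod_mod_cancel)
qed

lemma Fpow_lemma:
  assumes "p > 0" "q > 0"
  shows "length w = m \<Longrightarrow> 2 * t + 1 \<le> m \<Longrightarrow> set w \<subseteq> {..<p * q} \<Longrightarrow>
    wint p q (Fpow p q t w) = wint p q w div q^(2*t) mod (p*q)^(m-2*t)
    \<and> length (Fpow p q t w) = m - 2*t \<and> set (Fpow p q t w) \<subseteq> {..<p * q}"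
proof (induction t)
  case 0
  then show ?case using wint_lt[of w p q] by (simp add: Fpow_def)
next
  case (Suc t)
  let ?v = "Fpow p q t w"
  have IH: "wint p q ?v = wint p q w div q^(2*t) mod (p*q)^(m-2*t)"
    "length ?v = m - 2*t" "set ?v \<subseteq> {..<p * q}" using Suc by auto
  have e: "Fpow p q (Suc t) w = F p q ?v" by (simp add: Fpow_def)
  have m3: "m - 2*t \<ge> 3" using Suc.prems by simp
  note FL = F_lemma[OF assms IH(2) m3 IH(3)]
  have "wint p q (Fpow p q (Suc t) w)
      = (wint p q w div q^(2*t) mod (p*q)^(m-2*t)) div q^(2*1) mod (p*q)^(m-2*t-2*1)"
    unfolding e FL(1) IH(1) by simp
  also have "\<dots> = wint p q w div q^(2*t) div q^(2*1) mod (p*q)^(m-2*t-2*1)"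
    by (rule mod_div_mod) (use m3 assms in simp_all)
  also have "\<dots> = wint p q w div q^(2*Suc t) mod (p*q)^(m-2*Suc t)"
    by (simp add: div_mult2_eq[symmetric] power_add[symmetric] mult.commute)
  finally show ?case using FL(2,3) e by simp
qed

theorem lemma10:
  fixes p q t k :: nat and w1 w2 :: "nat list"
  assumes "p \<ge> 2" "q \<ge> 2" "coprime p q" "t > 0" "k \<ge> 2 * t + 1"
    and "length w1 = k" "set w1 \<subseteq> {..<p * q}"
    and "length w2 = k" "set w2 \<subseteq> {..<p * q}"
  shows "(wint p q w1 < q ^ (2 * t) \<longrightarrow> wint p q (Fpow p q t w1) = 0)
    \<and> (wint p q w2 mod (p * q) ^ k = (wint p q w1 + q ^ (2 * t)) mod (p * q) ^ k \<longrightarrow>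
        wint p q (Fpow p q t w2) mod (p * q) ^ (k - 2 * t)
          = (wint p q (Fpow p q t w1) + 1) mod (p * q) ^ (k - 2 * t))"
proof -
  have pq: "p > 0" "q > 0" using assms by auto
  let ?N1 = "wint p q w1" and ?N2 = "wint p q w2" and ?Q = "q^(2*t)" and ?B = "(p*q)^(k-2*t)"
  have F1: "wint p q (Fpow p q t w1) = ?N1 div ?Q mod ?B"
    using Fpow_lemma[OF pq assms(6,5,7)] by simp
  have F2: "wint p q (Fpow p q t w2) = ?N2 div ?Q mod ?B"
    using Fpow_lemma[OF pq assms(8,5,9)] by simp
  have Q: "?Q > 0" using pq by simp
  show ?thesis
  proof (intro conjI impI)
    assume "?N1 < ?Q"
    then show "wint p q (Fpow p q t w1) = 0" unfolding F1 by simp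
  next
    assume h: "?N2 mod (p * q) ^ k = (?N1 + ?Q) mod (p * q) ^ k"
    have "?N2 = (?N1 + ?Q) mod (p * q) ^ k"
      using h wint_lt[OF assms(9)] assms(8) by simp
    then have "wint p q (Fpow p q t w2) = ((?N1 + ?Q) mod (p * q) ^ k) div ?Q mod ?B"
      unfolding F2 by simp
    also have "\<dots> = (?N1 + ?Q) div ?Q mod ?B"
      by (rule mod_div_mod) (use assms in simp_all)
    also have "\<dots> = (?N1 div ?Q + 1) mod ?B" using Q by (subst div_add_self2) auto
    also have "\<dots> = (?N1 div ?Q mod ?B + 1) mod ?B" by (rule mod_add_left_eq[symmetric])
    finally show "wint p q (Fpow p q t w2) mod ?B = (wint p q (Fpow p q t w1) + 1) mod ?B"
      unfolding F1 by simp
  qed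
qed

end
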